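(* For a ring $R$, the following are equivalent: (1) $R$ is a DT ring; (2) $R$ is a semi-tripotent ring; (3) for each $a\in R$ there exist idempotents $e,f\in R$ with $ef=fe$ and $j\in J(R)$ such that $a=e+f+j$; (4) for each $a\in R$ there exist idempotents $e,f\in R$ with $ef=fe$ and $j\in J(R)$ such that $a=e-f+j$; (5) for each $a\in R$ there exist idempotents $e,f\in R$ with $ef=0=fe$ and $j\in J(R)$ such that $a=e-f+j$.
   Context: All rings are associative with identity. $J(R)$ is the Jacobson radical, $U(R)$ the group of units. $\Delta(R)=\{x\in R: x+u\in U(R)\text{ for all }u\in U(R)\}$. $\mathrm{Tr}(R)=\{x\in R: x^3=x\}$. A ring $R$ is a DT ring if every $r\in R$ can be written $r=e+d$ with $e\in\mathrm{Tr}(R)$ and $d\in\Delta(R)$. A ring $R$ is semi-tripotent if every $r\in R$ can be written $r=e+j$ with $e\in\mathrm{Tr}(R)$ and $j\in J(R)$. *)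

theory Defs
  imports Main
begin

definition units :: "'a::ring_1 set" where
  "units = {u. \<exists>v. u * v = 1 \<and> v * u = 1}"

definition left_ideal :: "'a::ring_1 set \<Rightarrow> bool" where
  "left_ideal I \<longleftrightarrow> 0 \<in> I \<and> (\<forall>x\<in>I. \<forall>y\<in>I. x + y \<in> I) \<and> (\<forall>x\<in>I. - x \<in> I)
     \<and> (\<forall>r. \<forall>x\<in>I. r * x \<in> I)"

definition maximal_left_ideal :: "'a::ring_1 set \<Rightarrow> bool" where
  "maximal_left_ideal M \<longleftrightarrow> left_ideal M \<and> M \<noteq> UNIV
     \<and> (\<forall>I. left_ideal I \<and> M \<subseteq> I \<and> I \<noteq> UNIV \<longrightarrow> I = M)"

definition jacobson :: "'a::ring_1 set" where
  "jacobson = \<Inter> {M. maximal_left_ideal M}"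

definition Delta :: "'a::ring_1 set" where
  "Delta = {x. \<forall>u\<in>units. x + u \<in> units}"

definition tripotents :: "'a::ring_1 set" where
  "tripotents = {x. x ^ 3 = x}"

definition DT_ring :: "'a::ring_1 itself \<Rightarrow> bool" where
  "DT_ring _ \<longleftrightarrow> (\<forall>r::'a. \<exists>e\<in>tripotents. \<exists>d\<in>Delta. r = e + d)"

definition semi_tripotent :: "'a::ring_1 itself \<Rightarrow> bool" where
  "semi_tripotent _ \<longleftrightarrow> (\<forall>r::'a. \<exists>e\<in>tripotents. \<exists>j\<in>jacobson. r = e + j)"

definition idempotent :: "'a::ring_1 \<Rightarrow> bool" where
  "idempotent e \<longleftrightarrow> e * e = e"

end

theory Submission
  imports Defs
begin


lemma unitsI: "u * v = 1 \<Longrightarrow> v * u = 1 \<Longrightarrow> u \<in> units"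
  unfolding units_def by blast

lemma unitsE: assumes "u \<in> units" obtains v where "u * v = 1" "v * u = 1"
  using assms unfolding units_def by blast

lemma one_unit: "1 \<in> units" by (rule unitsI[of 1 1]) simp_all

lemma mult_unit: assumes "u \<in> units" "w \<in> units" shows "u * w \<in> units"
proof -
  obtain u' where u: "u * u' = 1" "u' * u = 1" using assms(1) by (rule unitsE)
  obtain w' where w: "w * w' = 1" "w' * w = 1" using assms(2) by (rule unitsE)
  have "(u * w) * (w' * u') = 1" by (metis mult.assoc mult_1_left u(1) w(1))
  moreover have "(w' * u') * (u * w) = 1" by (metis mult.assoc mult_1_left u(2) w(2))
  ultimately show ?thesis by (rule unitsI)
qed

lemma neg_unit: assumes "u \<in> units" shows "- u \<in> units"
proof -
  obtain u' where u: "u * u' = 1" "u' * u = 1" using assms(1) by (rule unitsE)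
  show ?thesis by (rule unitsI[of _ "- u'"]) (simp_all add: u)
qed

lemma jacobson_swap:
  fixes a b :: "'a::ring_1"
  assumes "1 + a * b \<in> units" shows "1 + b * a \<in> units"
proof -
  obtain w where w: "(1 + a * b) * w = 1" "w * (1 + a * b) = 1" using assms by (rule unitsE)
  have w1: "w + a * b * w = 1" using w(1) by (simp add: algebra_simps)
  have w2: "w + w * a * b = 1" using w(2) by (simp add: algebra_simps)
  have "(1 + b * a) * (1 - b * w * a) = 1 + b * a - b * (w + a * b * w) * a"
    by (simp add: algebra_simps)
  also have "\<dots> = 1" using w1 by simp
  finally have 1: "(1 + b * a) * (1 - b * w * a) = 1" .
  have "(1 - b * w * a) * (1 + b * a) = 1 + b * a - b * (w + w * a * b) * a"
    by (simp add: algebra_simps)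
  also have "\<dots> = 1" using w2 by simp
  finally have 2: "(1 - b * w * a) * (1 + b * a) = 1" .
  show ?thesis using 1 2 by (rule unitsI)
qed

lemma li_zero: "left_ideal I \<Longrightarrow> 0 \<in> I" unfolding left_ideal_def by blast
lemma li_add: "left_ideal I \<Longrightarrow> x \<in> I \<Longrightarrow> y \<in> I \<Longrightarrow> x + y \<in> I" unfolding left_ideal_def by blast
lemma li_neg: "left_ideal I \<Longrightarrow> x \<in> I \<Longrightarrow> - x \<in> I" unfolding left_ideal_def by blast
lemma li_mult: "left_ideal I \<Longrightarrow> x \<in> I \<Longrightarrow> r * x \<in> I" unfolding left_ideal_def by blast
lemma li_intro: "0 \<in> I \<Longrightarrow> (\<And>x y. x \<in> I \<Longrightarrow> y \<in> I \<Longrightarrow> x + y \<in> I) \<Longrightarrow> (\<And>x. x \<in> I \<Longrightarrow> - x \<in> I)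
  \<Longrightarrow> (\<And>r x. x \<in> I \<Longrightarrow> r * x \<in> I) \<Longrightarrow> left_ideal I" unfolding left_ideal_def by blast


lemma max_li: "maximal_left_ideal M \<Longrightarrow> left_ideal M" unfolding maximal_left_ideal_def by blast

lemma J_mem: "x \<in> jacobson \<Longrightarrow> maximal_left_ideal M \<Longrightarrow> x \<in> M"
  unfolding jacobson_def by blast

lemma J_memI: "(\<And>M. maximal_left_ideal M \<Longrightarrow> x \<in> M) \<Longrightarrow> x \<in> jacobson"
  unfolding jacobson_def by blast

lemma J_lmult: "x \<in> jacobson \<Longrightarrow> r * x \<in> jacobson"
  by (intro J_memI li_mult[OF max_li]) (auto intro: J_mem)

lemma J_add: "x \<in> jacobson \<Longrightarrow> y \<in> jacobson \<Longrightarrow> x + y \<in> jacobson"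
  by (intro J_memI li_add[OF max_li]) (auto intro: J_mem)

lemma J_neg: "x \<in> jacobson \<Longrightarrow> - x \<in> jacobson"
  by (intro J_memI li_neg[OF max_li]) (auto intro: J_mem)

lemma J_diff: "x \<in> jacobson \<Longrightarrow> y \<in> jacobson \<Longrightarrow> x - y \<in> jacobson"
  using J_add J_neg by (metis diff_conv_add_uminus)

lemma J_zero: "0 \<in> jacobson"
  by (intro J_memI li_zero[OF max_li])

lemma J_intro:
  fixes x :: "'a::ring_1"
  assumes H: "\<And>r. 1 + r * x \<in> units" shows "x \<in> jacobson"
  unfolding jacobson_def
proof (rule InterI)
  fix M :: "'a set" assume "M \<in> {M. maximal_left_ideal M}"
  hence M: "maximal_left_ideal M" by simp
  hence LM: "left_ideal M" and NU: "M \<noteq> UNIV"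
    and mx: "\<And>I. left_ideal I \<Longrightarrow> M \<subseteq> I \<Longrightarrow> I \<noteq> UNIV \<Longrightarrow> I = M"
    unfolding maximal_left_ideal_def by blast+
  show "x \<in> M"
  proof (rule ccontr)
    assume xM: "x \<notin> M"
    define I where "I = {y. \<exists>m r. m \<in> M \<and> y = m + r * x}"
    have LI: "left_ideal I"
    proof (rule li_intro)
      have "0 \<in> M" using LM by (rule li_zero)
      moreover have "(0::'a) = 0 + 0 * x" by simp
      ultimately show "0 \<in> I" unfolding I_def by blast
    next
      fix y z assume "y \<in> I" "z \<in> I"
      then obtain m1 r1 m2 r2 where "y = m1 + r1 * x" "z = m2 + r2 * x" "m1 \<in> M" "m2 \<in> M"
        unfolding I_def by blast
      moreover have "m1 + r1 * x + (m2 + r2 * x) = (m1 + m2) + (r1 + r2) * x" by (simp add: algebra_simps)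
      moreover have "m1 + m2 \<in> M" using LM \<open>m1 \<in> M\<close> \<open>m2 \<in> M\<close> by (rule li_add)
      ultimately show "y + z \<in> I" unfolding I_def by blast
    next
      fix y assume "y \<in> I"
      then obtain m1 r1 where "y = m1 + r1 * x" "m1 \<in> M" unfolding I_def by blast
      moreover have "- (m1 + r1 * x) = (- m1) + (- r1) * x" by simp
      moreover have "- m1 \<in> M" using LM \<open>m1 \<in> M\<close> by (rule li_neg)
      ultimately show "- y \<in> I" unfolding I_def by blast
    next
      fix s y assume "y \<in> I"
      then obtain m1 r1 where "y = m1 + r1 * x" "m1 \<in> M" unfolding I_def by blast
      moreover have "s * (m1 + r1 * x) = (s * m1) + (s * r1) * x" by (simp add: distrib_left mult.assoc)
      moreover have "s * m1 \<in> M" using LM \<open>m1 \<in> M\<close> by (rule li_mult)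
      ultimately show "s * y \<in> I" unfolding I_def by blast
    qed
    have "M \<subseteq> I"
    proof
      fix m assume "m \<in> M"
      moreover have "m = m + 0 * x" by simp
      ultimately show "m \<in> I" unfolding I_def by blast
    qed
    moreover have "x \<in> I"
    proof -
      have "0 \<in> M" using LM by (rule li_zero)
      moreover have "x = 0 + 1 * x" by simp
      ultimately show ?thesis unfolding I_def by blast
    qed
    ultimately have "I = UNIV" using mx[OF LI] xM by blast
    hence "1 \<in> I" by simp
    then obtain m r where mr: "1 = m + r * x" "m \<in> M" unfolding I_def by blast
    have meq: "m = 1 + (- r) * x" using mr(1) by (simp add: algebra_simps)
    have "m \<in> units" by (subst meq) (rule H)
    then obtain v where "v * m = 1" by (metis unitsE)
    moreover have "v * m \<in> M" using LM mr(2) by (rule li_mult)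
    ultimately have one: "1 \<in> M" by simp
    have "UNIV = M"
    proof (rule UNIV_eq_I)
      fix y :: 'a
      have "y * 1 \<in> M" using LM one by (rule li_mult)
      thus "y \<in> M" by simp
    qed
    thus False using NU by blast
  qed
qed



lemma left_ideal_one: assumes "left_ideal I" "(1::'a::ring_1) \<in> I" shows "I = UNIV"
proof -
  have "UNIV = I"
  proof (rule UNIV_eq_I)
    fix y :: 'a
    have "y * 1 \<in> I" using assms by (rule li_mult)
    thus "y \<in> I" by simp
  qed
  thus ?thesis by simp
qed

lemma J_left_inv:
  fixes x :: "'a::ring_1"
  assumes xJ: "x \<in> jacobson" shows "\<exists>s. s * (1 + r * x) = 1"
proof (rule ccontr)
  assume nl: "\<not> (\<exists>s. s * (1 + r * x) = 1)"
  define y where "y = 1 + r * x"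
  define L where "L = {z. \<exists>s. z = s * y}"
  define A where "A = {I. left_ideal I \<and> L \<subseteq> I \<and> (1::'a) \<notin> I}"
  have LL: "left_ideal L"
  proof (rule li_intro)
    have "(0::'a) = 0 * y" by simp
    thus "0 \<in> L" unfolding L_def by blast
  next
    fix a b assume "a \<in> L" "b \<in> L"
    then obtain s1 s2 where "a = s1 * y" "b = s2 * y" unfolding L_def by blast
    hence "a + b = (s1 + s2) * y" by (simp add: distrib_right)
    thus "a + b \<in> L" unfolding L_def by blast
  next
    fix a assume "a \<in> L"
    then obtain s1 where "a = s1 * y" unfolding L_def by blast
    hence "- a = (- s1) * y" by simp
    thus "- a \<in> L" unfolding L_def by blast
  next
    fix t a assume "a \<in> L"
    then obtain s1 where "a = s1 * y" unfolding L_def by blast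
    hence "t * a = (t * s1) * y" by (simp add: mult.assoc)
    thus "t * a \<in> L" unfolding L_def by blast
  qed
  have "1 \<notin> L"
  proof
    assume "1 \<in> L"
    then obtain s where "1 = s * y" unfolding L_def by blast
    hence "s * (1 + r * x) = 1" unfolding y_def by simp
    thus False using nl by blast
  qed
  hence "L \<in> A" unfolding A_def using LL by blast
  hence Ane: "A \<noteq> {}" by blast
  have "\<exists>M\<in>A. \<forall>X\<in>A. M \<subseteq> X \<longrightarrow> X = M"
  proof (rule subset_Zorn_nonempty[OF Ane])
    fix C assume Cne: "C \<noteq> {}" and ch: "subset.chain A C"
    hence CA: "C \<subseteq> A" and tot: "\<And>X Y. X \<in> C \<Longrightarrow> Y \<in> C \<Longrightarrow> X \<subseteq> Y \<or> Y \<subseteq> X"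
      unfolding subset.chain_def by blast+
    have li: "\<And>X. X \<in> C \<Longrightarrow> left_ideal X" using CA unfolding A_def by blast
    have "left_ideal (\<Union>C)"
    proof (rule li_intro)
      obtain X where "X \<in> C" using Cne by blast
      thus "0 \<in> \<Union>C" using li li_zero by blast
    next
      fix a b assume "a \<in> \<Union>C" "b \<in> \<Union>C"
      then obtain X Y where XY: "X \<in> C" "Y \<in> C" "a \<in> X" "b \<in> Y" by blast
      show "a + b \<in> \<Union>C"
      proof (cases "X \<subseteq> Y")
        case True
        hence "a + b \<in> Y" using XY li li_add by blast
        thus ?thesis using XY by blast
      next
        case False
        hence "Y \<subseteq> X" using tot XY by blast
        hence "a + b \<in> X" using XY li li_add by blast
        thus ?thesis using XY by blast
      qed
    next
      fix a assume "a \<in> \<Union>C"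
      then obtain X where "X \<in> C" "a \<in> X" by blast
      thus "- a \<in> \<Union>C" using li li_neg by blast
    next
      fix s a assume "a \<in> \<Union>C"
      then obtain X where "X \<in> C" "a \<in> X" by blast
      thus "s * a \<in> \<Union>C" using li li_mult by blast
    qed
    moreover have "L \<subseteq> \<Union>C" using Cne CA unfolding A_def by blast
    moreover have "1 \<notin> \<Union>C" using CA unfolding A_def by blast
    ultimately show "\<Union>C \<in> A" unfolding A_def by blast
  qed
  then obtain M where MA: "M \<in> A" and mx: "\<And>X. X \<in> A \<Longrightarrow> M \<subseteq> X \<Longrightarrow> X = M" by blast
  have LM: "left_ideal M" and LsM: "L \<subseteq> M" and oM: "1 \<notin> M" using MA unfolding A_def by blast+
  have "maximal_left_ideal M" unfolding maximal_left_ideal_def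
  proof (intro conjI allI impI)
    show "left_ideal M" by (rule LM)
    show "M \<noteq> UNIV" using oM by blast
    fix I assume I: "left_ideal I \<and> M \<subseteq> I \<and> I \<noteq> UNIV"
    hence "1 \<notin> I" using left_ideal_one by blast
    hence "I \<in> A" using I LsM unfolding A_def by blast
    thus "I = M" using mx I by blast
  qed
  hence "x \<in> M" using xJ by (rule J_mem[rotated])
  hence rx: "r * x \<in> M" using LM by (intro li_mult)
  have "y \<in> L" unfolding L_def by (metis (mono_tags) mem_Collect_eq mult_1_left)
  hence "y \<in> M" using LsM by blast
  hence "y + - (r * x) \<in> M" using LM rx by (intro li_add li_neg)
  moreover have "y + - (r * x) = 1" unfolding y_def by simp
  ultimately show False using oM by simp
qed

lemma J_unit:
  fixes x :: "'a::ring_1"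
  assumes xJ: "x \<in> jacobson" shows "1 + r * x \<in> units"
proof -
  obtain s where s: "s * (1 + r * x) = 1" using J_left_inv[OF xJ] by blast
  have seq: "s = 1 + (- (s * r)) * x"
  proof -
    have "s + s * r * x = 1" using s by (simp add: distrib_left mult.assoc)
    thus ?thesis by (simp add: eq_diff_eq[symmetric])
  qed
  obtain t where t: "t * s = 1" using J_left_inv[OF xJ, of "- (s * r)"] seq by metis
  have "t = t * (s * (1 + r * x))" using s by simp
  also have "\<dots> = 1 + r * x" using t by (simp add: mult.assoc[symmetric])
  finally have "(1 + r * x) * s = 1" using t by simp
  thus ?thesis using s by (rule unitsI)
qed

lemma J_rmult:
  fixes x :: "'a::ring_1"
  assumes xJ: "x \<in> jacobson" shows "x * r \<in> jacobson"
proof (rule J_intro)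
  fix s
  have "1 + r * ((s * x)) \<in> units" using J_unit[OF xJ, of "r * s"] by (simp add: mult.assoc)
  hence "1 + (s * x) * r \<in> units" by (rule jacobson_swap)
  thus "1 + s * (x * r) \<in> units" by (simp add: mult.assoc)
qed

lemma J_Delta: assumes "x \<in> jacobson" shows "x \<in> Delta"
  unfolding Delta_def
proof (intro CollectI ballI)
  fix u :: 'a assume "u \<in> units"
  then obtain v where v: "u * v = 1" "v * u = 1" by (rule unitsE)
  have "x + u = u * (1 + v * x)" by (simp add: distrib_left mult.assoc[symmetric] v add.commute)
  thus "x + u \<in> units" using mult_unit[OF \<open>u \<in> units\<close> J_unit[OF assms]] by simp
qed



lemma DeltaD: "d \<in> Delta \<Longrightarrow> u \<in> units \<Longrightarrow> d + u \<in> units"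
  unfolding Delta_def by blast

lemma DeltaI: "(\<And>u. u \<in> units \<Longrightarrow> d + u \<in> units) \<Longrightarrow> d \<in> Delta"
  unfolding Delta_def by blast

lemma unitsI2: assumes "l * z = 1" "z * r = 1" shows "z \<in> units"
proof -
  have "l = l * (z * r)" using assms(2) by simp
  also have "\<dots> = r" using assms(1) by (simp add: mult.assoc[symmetric])
  finally show ?thesis using assms by (intro unitsI[of z r]) simp_all
qed

lemma Delta_add: assumes "x \<in> Delta" "y \<in> Delta" shows "x + y \<in> Delta"
proof (rule DeltaI)
  fix u :: 'a assume "u \<in> units"
  hence "y + u \<in> units" using assms(2) by (intro DeltaD[of y])
  hence "x + (y + u) \<in> units" using assms(1) by (intro DeltaD[of x])
  thus "x + y + u \<in> units" by (simp add: add.assoc)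
qed

lemma Delta_neg: assumes "x \<in> Delta" shows "- x \<in> Delta"
proof (rule DeltaI)
  fix u :: 'a assume "u \<in> units"
  hence "x + - u \<in> units" using assms by (intro DeltaD neg_unit)
  hence "- (x + - u) \<in> units" by (rule neg_unit)
  thus "- x + u \<in> units" by simp
qed

lemma Delta_diff: "x \<in> Delta \<Longrightarrow> y \<in> Delta \<Longrightarrow> x - y \<in> Delta"
  by (metis Delta_add Delta_neg diff_conv_add_uminus)

lemma Delta_one_plus: assumes "d \<in> Delta" shows "1 + d \<in> units"
proof -
  have "d + 1 \<in> units" using assms one_unit by (rule DeltaD)
  thus ?thesis by (simp add: add.commute)
qed

lemma Delta_lmult_unit: assumes "u \<in> units" "d \<in> Delta" shows "u * d \<in> Delta"
proof (rule DeltaI)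
  fix w :: 'a assume w: "w \<in> units"
  obtain v where v: "u * v = 1" "v * u = 1" using assms(1) by (rule unitsE)
  have "v \<in> units" using v by (intro unitsI[of v u]) simp_all
  hence "d + v * w \<in> units" using assms(2) w by (intro DeltaD mult_unit)
  hence "u * (d + v * w) \<in> units" using assms(1) by (intro mult_unit)
  moreover have "u * (d + v * w) = u * d + w" by (simp add: distrib_left mult.assoc[symmetric] v)
  ultimately show "u * d + w \<in> units" by simp
qed

lemma Delta_mult: assumes a: "a \<in> Delta" and b: "b \<in> Delta" shows "a * b \<in> Delta"
proof (rule DeltaI)
  fix u :: 'a assume u: "u \<in> units"
  obtain v where v: "u * v = 1" "v * u = 1" using u by (rule unitsE)
  have vu: "v \<in> units" using v by (intro unitsI[of v u]) simp_all
  define c where "c = v * a"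
  have c: "c \<in> Delta" unfolding c_def using vu a by (rule Delta_lmult_unit)
  have "(1 + c) * (1 + b) \<in> units" using c b by (intro mult_unit Delta_one_plus)
  hence "- (c + b) + (1 + c) * (1 + b) \<in> units" using c b by (intro DeltaD Delta_neg Delta_add)
  moreover have "- (c + b) + (1 + c) * (1 + b) = 1 + c * b" by (simp add: algebra_simps)
  ultimately have "1 + c * b \<in> units" by simp
  hence "u * (1 + c * b) \<in> units" using u by (intro mult_unit)
  moreover have "u * (1 + c * b) = a * b + u" unfolding c_def
    by (simp add: distrib_left mult.assoc[symmetric] v add.commute)
  ultimately show "a * b + u \<in> units" by simp
qed

lemma idem_one_plus:
  fixes e d :: "'a::ring_1"
  assumes e: "e * e = e" and d: "d \<in> Delta" shows "1 + e * d \<in> units"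
proof -
  have ee: "\<And>z. e * (e * z) = e * z" using e by (simp add: mult.assoc[symmetric])
  define p where "p = e * d * (1 - e)"
  define q where "q = (1 - e) * d * e"
  have e1: "e * (1 - e) = 0" "(1 - e) * e = 0" "(1 - e) * (1 - e) = 1 - e"
    using e by (simp_all add: algebra_simps)
  have pp: "p * p = 0" unfolding p_def
    by (metis e1(2) mult.assoc mult_zero_left mult_zero_right)
  have qq: "q * q = 0" unfolding q_def
    by (metis e1(1) mult.assoc mult_zero_left mult_zero_right)
  have pu: "1 - p \<in> units" by (rule unitsI[of _ "1 + p"]) (simp_all add: algebra_simps pp)
  have qu: "1 - q \<in> units" by (rule unitsI[of _ "1 + q"]) (simp_all add: algebra_simps qq)
  define X where "X = d + (1 - p)"
  define X' where "X' = d + (1 - q)"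
  have "X \<in> units" unfolding X_def using d pu by (rule DeltaD)
  then obtain Y where Y: "X * Y = 1" "Y * X = 1" by (rule unitsE)
  have "X' \<in> units" unfolding X'_def using d qu by (rule DeltaD)
  then obtain Y' where Y': "X' * Y' = 1" "Y' * X' = 1" by (rule unitsE)
  define A where "A = e + e * d * e"
  have eX: "e * X = A" unfolding X_def p_def A_def
    by (simp add: algebra_simps e ee)
  have Xe: "X' * e = A" unfolding X'_def q_def A_def
    by (simp add: algebra_simps e ee)
  have A1: "A * (1 - e) = 0" "(1 - e) * A = 0" unfolding A_def
    by (simp_all add: algebra_simps e ee)
  have Ae: "A * e = A" "e * A = A" unfolding A_def
    by (simp_all add: algebra_simps e ee)
  define P where "P = e * Y * e"
  define P' where "P' = e * Y' * e"
  have AP: "A * P = e"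
  proof -
    have "A * P = (A * e) * Y * e" unfolding P_def by (simp add: mult.assoc)
    also have "\<dots> = (e * X) * Y * e" using Ae eX by simp
    also have "\<dots> = e * (X * Y) * e" by (simp add: mult.assoc)
    also have "\<dots> = e" using Y e by simp
    finally show ?thesis .
  qed
  have P'A: "P' * A = e"
  proof -
    have "P' * A = e * Y' * (e * A)" unfolding P'_def by (simp add: mult.assoc)
    also have "\<dots> = e * Y' * (X' * e)" using Ae Xe by simp
    also have "\<dots> = e * (Y' * X') * e" by (simp add: mult.assoc)
    also have "\<dots> = e" using Y' e by simp
    finally show ?thesis .
  qed
  have P0: "(1 - e) * P = 0" unfolding P_def by (simp add: mult.assoc[symmetric] e1)
  have P'0: "P' * (1 - e) = 0" unfolding P'_def by (simp add: mult.assoc e1)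
  have Aeq: "1 + e * d * e = A + (1 - e)" unfolding A_def by simp
  have r: "(A + (1 - e)) * (P + (1 - e)) = 1"
  proof -
    have "(A + (1 - e)) * (P + (1 - e)) = A * P + A * (1 - e) + ((1 - e) * P + (1 - e) * (1 - e))"
      by (simp only: distrib_left distrib_right add_ac)
    also have "\<dots> = 1" using AP A1 P0 e1 by simp
    finally show ?thesis .
  qed
  have l: "(P' + (1 - e)) * (A + (1 - e)) = 1"
  proof -
    have "(P' + (1 - e)) * (A + (1 - e)) = P' * A + P' * (1 - e) + ((1 - e) * A + (1 - e) * (1 - e))"
      by (simp only: distrib_left distrib_right add_ac)
    also have "\<dots> = 1" using P'A A1 P'0 e1 by simp
    finally show ?thesis .
  qed
  have "1 + (e * d) * e \<in> units" unfolding Aeq using l r by (rule unitsI2)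
  hence "1 + e * (e * d) \<in> units" by (rule jacobson_swap)
  thus ?thesis by (simp add: ee)
qed

lemma Delta_lmult_idem: assumes e: "e * e = e" and d: "d \<in> Delta" shows "e * d \<in> Delta"
proof (rule DeltaI)
  fix u :: 'a assume u: "u \<in> units"
  obtain v where v: "u * v = 1" "v * u = 1" using u by (rule unitsE)
  have vu: "v \<in> units" using v by (intro unitsI[of v u]) simp_all
  have ee: "\<And>z. e * (e * z) = e * z" using e by (simp add: mult.assoc[symmetric])
  have uvz: "\<And>z. u * (v * z) = z" using v by (simp add: mult.assoc[symmetric])
  define g where "g = v * e * u"
  have gg: "g * g = g" unfolding g_def by (simp add: mult.assoc uvz ee)
  have vd: "v * d \<in> Delta" using vu d by (rule Delta_lmult_unit)
  have "1 + g * (v * d) \<in> units" using gg vd by (rule idem_one_plus)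
  hence "u * (1 + g * (v * d)) \<in> units" using u by (intro mult_unit)
  moreover have "u * (1 + g * (v * d)) = e * d + u" unfolding g_def
    by (simp add: distrib_left mult.assoc uvz add.commute)
  ultimately show "e * d + u \<in> units" by simp
qed

lemma Delta_lmult_trip: assumes t: "t ^ 3 = t" and d: "d \<in> Delta" shows "t * d \<in> Delta"
proof -
  have t3: "t * (t * t) = t" using t by (simp add: power3_eq_cube mult.assoc)
  define w where "w = t + (1 - t * t)"
  define g where "g = 1 - t * t"
  have ww: "w * w = 1" unfolding w_def by (simp add: algebra_simps t3)
  have gg: "g * g = g" unfolding g_def by (simp add: algebra_simps t3)
  have wu: "w \<in> units" using ww by (intro unitsI[of w w])
  have "w * d - g * d \<in> Delta" using wu d gg by (intro Delta_diff Delta_lmult_unit Delta_lmult_idem)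
  moreover have "w * d - g * d = t * d" unfolding w_def g_def by (simp add: algebra_simps)
  ultimately show ?thesis by simp
qed



lemma J_mult_cong:
  fixes x :: "'a::ring_1"
  assumes "x - x' \<in> jacobson" "y - y' \<in> jacobson" shows "x * y - x' * y' \<in> jacobson"
proof -
  have "x * y - x' * y' = (x - x') * y + x' * (y - y')" by (simp add: algebra_simps)
  moreover have "(x - x') * y + x' * (y - y') \<in> jacobson"
    using assms by (intro J_add J_rmult J_lmult)
  ultimately show ?thesis by simp
qed

lemma DT_imp_ST: assumes "DT_ring (R::'a::ring_1 itself)" shows "semi_tripotent R"
  unfolding semi_tripotent_def
proof
  fix r :: 'a
  have dt: "\<And>r::'a. \<exists>e\<in>tripotents. \<exists>d\<in>Delta. r = e + d" using assms unfolding DT_ring_def by blast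
  obtain t d where t: "t \<in> tripotents" and d: "d \<in> Delta" and r: "r = t + d" using dt[of r] by blast
  have "d \<in> jacobson"
  proof (rule J_intro)
    fix s :: 'a
    obtain t' d' where t': "t' \<in> tripotents" and d': "d' \<in> Delta" and s: "s = t' + d'" using dt[of s] by blast
    have "t' ^ 3 = t'" using t' unfolding tripotents_def by simp
    hence "t' * d + d' * d \<in> Delta" using d d' by (intro Delta_add Delta_lmult_trip Delta_mult)
    moreover have "s * d = t' * d + d' * d" using s by (simp add: distrib_right)
    ultimately have "s * d \<in> Delta" by simp
    thus "1 + s * d \<in> units" by (rule Delta_one_plus)
  qed
  thus "\<exists>e\<in>tripotents. \<exists>j\<in>jacobson. r = e + j" using t r by blast
qed

lemma ST_imp_DT: assumes "semi_tripotent (R::'a::ring_1 itself)" shows "DT_ring R"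
  using assms J_Delta unfolding semi_tripotent_def DT_ring_def by blast

lemma ST_cube: assumes "semi_tripotent (R::'a::ring_1 itself)" shows "(a::'a) * a * a - a \<in> jacobson"
proof -
  obtain t j where t: "t \<in> tripotents" and j: "j \<in> jacobson" and a: "a = t + j"
    using assms unfolding semi_tripotent_def by blast
  have ttt: "t * t * t = t" using t unfolding tripotents_def by (simp add: power3_eq_cube)
  have at: "a - t \<in> jacobson" using a j by simp
  have "a * a * a - t * t * t \<in> jacobson" by (rule J_mult_cong[OF J_mult_cong[OF at at] at])
  hence "(a * a * a - t * t * t) - (a - t) \<in> jacobson" using at by (rule J_diff)
  moreover have "(a * a * a - t * t * t) - (a - t) = a * a * a - a" using ttt by simp
  ultimately show ?thesis by simp
qed

lemma ST_three: assumes "semi_tripotent (R::'a::ring_1 itself)"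
  shows "((a::'a) * a - a) + (a * a - a) + (a * a - a) \<in> jacobson"
proof -
  have K: "((a-1)*(a-1)*(a-1) - (a-1)) - (a*a*a - a) \<in> jacobson"
    by (rule J_diff[OF ST_cube[OF assms] ST_cube[OF assms]])
  have "((a-1)*(a-1)*(a-1) - (a-1)) - (a*a*a - a) = - ((a*a - a) + (a*a - a) + (a*a - a))"
    by (simp add: algebra_simps)
  hence "- ((a*a - a) + (a*a - a) + (a*a - a)) \<in> jacobson" using K by simp
  hence "- (- ((a*a - a) + (a*a - a) + (a*a - a))) \<in> jacobson" by (rule J_neg)
  thus ?thesis by simp
qed

lemma ST_lift: assumes "semi_tripotent (R::'a::ring_1 itself)" and x: "(x::'a) * x - x \<in> jacobson"
  shows "\<exists>e. e * e = e \<and> e - x \<in> jacobson"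
proof -
  obtain t j where t: "t \<in> tripotents" and j: "j \<in> jacobson" and xe: "x = t + j"
    using assms unfolding semi_tripotent_def by blast
  have t3: "t * (t * t) = t" using t unfolding tripotents_def by (simp add: power3_eq_cube mult.assoc)
  have xt: "x - t \<in> jacobson" using xe j by simp
  have xxtt: "x * x - t * t \<in> jacobson" using xt xt by (rule J_mult_cong)
  have "(x * x - x) - (x * x - t * t) + (x - t) \<in> jacobson" by (rule J_add[OF J_diff[OF x xxtt] xt])
  moreover have "(x * x - x) - (x * x - t * t) + (x - t) = t * t - t" by (simp add: algebra_simps)
  ultimately have tt: "t * t - t \<in> jacobson" by simp
  have "(t * t) * (t * t) = t * t" by (simp add: mult.assoc t3)
  moreover have "t * t - x \<in> jacobson"
  proof -
    have "(t * t - t) - (x - t) \<in> jacobson" using tt xt by (rule J_diff)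
    thus ?thesis by simp
  qed
  ultimately show ?thesis by blast
qed

lemma orth_lift:
  fixes e h :: "'a::ring_1"
  assumes e: "e * e = e" and h: "h * h = h" and eh: "e * h \<in> jacobson" and he: "h * e \<in> jacobson"
  shows "\<exists>f. f * f = f \<and> e * f = 0 \<and> f * e = 0 \<and> f - h \<in> jacobson"
proof -
  define k where "k = h * e * h"
  have kJ: "k \<in> jacobson" unfolding k_def using he by (rule J_rmult)
  have "1 + (- 1) * k \<in> units" using kJ by (rule J_unit)
  hence "1 - k \<in> units" by simp
  then obtain w where w: "(1 - k) * w = 1" "w * (1 - k) = 1" by (rule unitsE)
  have hk: "h * k = k" "k * h = k" unfolding k_def using h by (simp_all add: mult.assoc[symmetric]) (simp add: mult.assoc)
  have h1k: "h * (1 - k) = (1 - k) * h" using hk by (simp add: algebra_simps)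
  have hw: "w * h = h * w"
  proof -
    have "w * h = w * h * ((1 - k) * w)" using w by simp
    also have "\<dots> = w * (h * (1 - k)) * w" by (simp add: mult.assoc)
    also have "\<dots> = w * ((1 - k) * h) * w" using h1k by simp
    also have "\<dots> = (w * (1 - k)) * h * w" by (simp add: mult.assoc)
    also have "\<dots> = h * w" using w by simp
    finally show ?thesis .
  qed
  have e1: "e * (1 - e) = 0" "(1 - e) * e = 0" "(1 - e) * (1 - e) = 1 - e"
    using e by (simp_all add: algebra_simps)
  define f where "f = (1 - e) * h * w * h * (1 - e)"
  have mid: "h * (1 - e) * ((1 - e) * h) = h * (1 - k)"
  proof -
    have "h * (1 - e) * ((1 - e) * h) = h * ((1 - e) * (1 - e)) * h" by (simp add: mult.assoc)
    also have "\<dots> = h * h - h * e * h" using e1 by (simp add: algebra_simps)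
    also have "\<dots> = h * (1 - k)" using h hk unfolding k_def by (simp add: algebra_simps)
    finally show ?thesis .
  qed
  have ff: "f * f = f"
  proof -
    have "f * f = ((1 - e) * h * w) * (h * (1 - e) * ((1 - e) * h)) * (w * h * (1 - e))"
      unfolding f_def by (simp add: mult.assoc)
    also have "\<dots> = ((1 - e) * h * w) * (h * (1 - k)) * (w * h * (1 - e))" using mid by simp
    also have "\<dots> = ((1 - e) * h * (w * h)) * ((1 - k) * w) * (h * (1 - e))" by (simp add: mult.assoc)
    also have "\<dots> = (1 - e) * h * (h * w) * (h * (1 - e))" using w hw by simp
    also have "\<dots> = (1 - e) * (h * h) * w * h * (1 - e)" by (simp add: mult.assoc)
    also have "\<dots> = f" unfolding f_def using h by simp
    finally show ?thesis .
  qed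
  have ef: "e * f = 0" unfolding f_def using e1 by (simp add: mult.assoc[symmetric])
  have fe: "f * e = 0" unfolding f_def using e1 by (simp add: mult.assoc)
  have w1: "w - 1 = w * k" using w by (simp add: algebra_simps)
  have w1J: "w - 1 \<in> jacobson" unfolding w1 using kJ by (rule J_lmult)
  have "f - h = (1 - e) * h * (w - 1) * h * (1 - e) + ((1 - e) * (h * h) * (1 - e) - h)"
    unfolding f_def by (simp add: algebra_simps)
  also have "(1 - e) * (h * h) * (1 - e) - h = e * h * e - e * h - h * e"
    using h by (simp add: algebra_simps)
  finally have fh: "f - h = (1 - e) * h * (w - 1) * h * (1 - e) + (e * h * e - e * h - h * e)" .
  have "(1 - e) * h * (w - 1) * h * (1 - e) + (e * h * e - e * h - h * e) \<in> jacobson"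
    by (rule J_add[OF J_rmult[OF J_rmult[OF J_lmult[OF w1J]]] J_diff[OF J_diff[OF J_rmult[OF eh] eh] he]])
  hence "f - h \<in> jacobson" using fh by simp
  thus ?thesis using ff ef fe by blast
qed



lemma ST_P5: assumes st: "semi_tripotent (R::'a::ring_1 itself)"
  shows "\<exists>e f j. idempotent e \<and> idempotent f \<and> e * f = 0 \<and> f * e = 0 \<and> j \<in> jacobson \<and> (a::'a) = e - f + j"
proof -
  define c where "c = a * a * a - a"
  define q where "q = a * a - a"
  define E where "E = a * a + a * a - a"
  define F where "F = a * a + a * a - a - a"
  have cJ: "c \<in> jacobson" unfolding c_def by (rule ST_cube[OF st])
  have qJ: "q + q + q \<in> jacobson" using ST_three[OF st, of a] unfolding q_def by simp
  have acJ: "a * c \<in> jacobson" using cJ by (rule J_lmult)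
  have a4: "a * c + a * c + a * c + a * c \<in> jacobson" using acJ by (intro J_add)
  have c4: "c + c + c + c \<in> jacobson" using cJ by (intro J_add)
  have c6: "c + c + c + c + c + c \<in> jacobson" using cJ by (intro J_add)
  have c8: "c + c + c + c + c + c + c + c \<in> jacobson" using cJ by (intro J_add)
  have q6: "q + q + q + q + q + q \<in> jacobson"
  proof -
    have "(q + q + q) + (q + q + q) \<in> jacobson" by (rule J_add[OF qJ qJ])
    thus ?thesis by (simp add: add.assoc)
  qed
  have "E * E - E = (a*c + a*c + a*c + a*c) - (c + c + c + c) + (q + q + q)"
    unfolding c_def q_def E_def by (simp add: algebra_simps)
  hence EE: "E * E - E \<in> jacobson" using J_add[OF J_diff[OF a4 c4] qJ] by simp
  have "F * F - F = (a*c + a*c + a*c + a*c) - (c + c + c + c + c + c + c + c) + (q + q + q + q + q + q)"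
    unfolding c_def q_def F_def by (simp add: algebra_simps)
  hence FF: "F * F - F \<in> jacobson" using J_add[OF J_diff[OF a4 c8] q6] by simp
  have "E * F = (a*c + a*c + a*c + a*c) - (c + c + c + c + c + c) + (q + q + q + q + q + q)"
    unfolding c_def q_def E_def F_def by (simp add: algebra_simps)
  hence EF: "E * F \<in> jacobson" using J_add[OF J_diff[OF a4 c6] q6] by simp
  have "F * E = (a*c + a*c + a*c + a*c) - (c + c + c + c + c + c) + (q + q + q + q + q + q)"
    unfolding c_def q_def E_def F_def by (simp add: algebra_simps)
  hence FE: "F * E \<in> jacobson" using J_add[OF J_diff[OF a4 c6] q6] by simp
  obtain e where e: "e * e = e" and eE: "e - E \<in> jacobson" using ST_lift[OF st EE] by blast
  obtain h where h: "h * h = h" and hF: "h - F \<in> jacobson" using ST_lift[OF st FF] by blast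
  have "e * h - E * F \<in> jacobson" using eE hF by (rule J_mult_cong)
  hence ehJ: "e * h \<in> jacobson" using J_add[OF _ EF] by fastforce
  have "h * e - F * E \<in> jacobson" using hF eE by (rule J_mult_cong)
  hence heJ: "h * e \<in> jacobson" using J_add[OF _ FE] by fastforce
  obtain f where f: "f * f = f" and ef: "e * f = 0" and fe: "f * e = 0" and fh: "f - h \<in> jacobson"
    using orth_lift[OF e h ehJ heJ] by blast
  define j where "j = a - (e - f)"
  have "- (e - E) + (f - h) + (h - F) \<in> jacobson" by (rule J_add[OF J_add[OF J_neg[OF eE] fh] hF])
  moreover have "- (e - E) + (f - h) + (h - F) = j" unfolding j_def E_def F_def by (simp add: algebra_simps)
  ultimately have "j \<in> jacobson" by simp
  moreover have "a = e - f + j" unfolding j_def by simp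
  ultimately show ?thesis using e f ef fe unfolding idempotent_def by blast
qed

lemma P4_ST:
  fixes e f :: "'a::ring_1"
  assumes e: "e * e = e" and f: "f * f = f" and c: "e * f = f * e"
  shows "e - f \<in> tripotents"
proof -
  have ee: "\<And>z. e * (e * z) = e * z" using e by (simp add: mult.assoc[symmetric])
  have ff: "\<And>z. f * (f * z) = f * z" using f by (simp add: mult.assoc[symmetric])
  have fez: "\<And>z. f * (e * z) = e * (f * z)" using c by (simp add: mult.assoc[symmetric])
  have "(e - f) * (e - f) = e - e * f - e * f + f" using e f c by (simp add: algebra_simps)
  hence "(e - f) * (e - f) * (e - f) = (e - e * f - e * f + f) * (e - f)" by simp
  also have "\<dots> = e - f" using e f c by (simp add: algebra_simps ee ff fez)
  finally show ?thesis unfolding tripotents_def by (simp add: power3_eq_cube)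
qed

theorem theorem4p10:
  fixes R :: "'a::ring_1 itself"
  shows "(DT_ring R \<longleftrightarrow> semi_tripotent R)
   \<and> (semi_tripotent R \<longleftrightarrow> (\<forall>a::'a. \<exists>e f j. idempotent e \<and> idempotent f \<and> e * f = f * e
          \<and> j \<in> jacobson \<and> a = e + f + j))
   \<and> (semi_tripotent R \<longleftrightarrow> (\<forall>a::'a. \<exists>e f j. idempotent e \<and> idempotent f \<and> e * f = f * e
          \<and> j \<in> jacobson \<and> a = e - f + j))
   \<and> (semi_tripotent R \<longleftrightarrow> (\<forall>a::'a. \<exists>e f j. idempotent e \<and> idempotent f \<and> e * f = 0 \<and> f * e = 0
          \<and> j \<in> jacobson \<and> a = e - f + j))"
proof -
  let ?P3 = "\<forall>a::'a. \<exists>e f j. idempotent e \<and> idempotent f \<and> e * f = f * e \<and> j \<in> jacobson \<and> a = e + f + j"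
  let ?P4 = "\<forall>a::'a. \<exists>e f j. idempotent e \<and> idempotent f \<and> e * f = f * e \<and> j \<in> jacobson \<and> a = e - f + j"
  let ?P5 = "\<forall>a::'a. \<exists>e f j. idempotent e \<and> idempotent f \<and> e * f = 0 \<and> f * e = 0 \<and> j \<in> jacobson \<and> a = e - f + j"
  have 12: "DT_ring R \<longleftrightarrow> semi_tripotent R" using DT_imp_ST ST_imp_DT by blast
  have 25: "semi_tripotent R \<Longrightarrow> ?P5" using ST_P5 by blast
  have 54: "?P5 \<Longrightarrow> ?P4" by fastforce
  have 42: "?P4 \<Longrightarrow> semi_tripotent R"
    unfolding semi_tripotent_def
  proof
    fix r :: 'a assume P4: ?P4
    then obtain e f j where "idempotent e" "idempotent f" "e * f = f * e" "j \<in> jacobson" "r = e - f + j"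
      by blast
    moreover have "e - f \<in> tripotents" using calculation unfolding idempotent_def by (intro P4_ST)
    ultimately show "\<exists>e\<in>tripotents. \<exists>j\<in>jacobson. r = e + j" by blast
  qed
  have 34: "?P3 \<Longrightarrow> ?P4"
  proof
    fix a :: 'a assume P3: ?P3
    then obtain e f j where ef: "idempotent e" "idempotent f" "e * f = f * e" "j \<in> jacobson" "a + 1 = e + f + j"
      by blast
    have "idempotent (1 - f)" using ef(2) unfolding idempotent_def by (simp add: algebra_simps)
    moreover have "e * (1 - f) = (1 - f) * e" using ef(3) by (simp add: algebra_simps)
    moreover have "a = e - (1 - f) + j"
    proof -
      have "a = (e + f + j) - 1" using ef(5) by (metis add_diff_cancel_right')
      also have "\<dots> = e - (1 - f) + j" by (simp add: algebra_simps)
      finally show ?thesis .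
    qed
    ultimately show "\<exists>e f j. idempotent e \<and> idempotent f \<and> e * f = f * e \<and> j \<in> jacobson \<and> a = e - f + j"
      using ef by blast
  qed
  have 43: "?P4 \<Longrightarrow> ?P3"
  proof
    fix a :: 'a assume P4: ?P4
    then obtain e f j where ef: "idempotent e" "idempotent f" "e * f = f * e" "j \<in> jacobson" "a - 1 = e - f + j"
      by blast
    have "idempotent (1 - f)" using ef(2) unfolding idempotent_def by (simp add: algebra_simps)
    moreover have "e * (1 - f) = (1 - f) * e" using ef(3) by (simp add: algebra_simps)
    moreover have "a = e + (1 - f) + j"
    proof -
      have "a = (e - f + j) + 1" using ef(5) by (metis diff_add_cancel)
      also have "\<dots> = e + (1 - f) + j" by (simp add: algebra_simps)
      finally show ?thesis .
    qed
    ultimately show "\<exists>e f j. idempotent e \<and> idempotent f \<and> e * f = f * e \<and> j \<in> jacobson \<and> a = e + f + j"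
      using ef by blast
  qed
  show ?thesis using 12 25 54 42 34 43 by blast
qed

end
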